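(* Let $A$ be a Banach algebra, $f\in A^*$ and $a,b\in A$. Let $L_a,R_a:A\to A$ be $L_ax=ax$, $R_ax=xa$. (a) If $f\in\mathrm{wpL}(A)$ and $L_a$ is weakly precompact, then $fa\in\mathrm{rcc}(A)$; if $f\in\mathrm{wpL}(A)$ and $R_a$ is weakly precompact, then $af\in\mathrm{lcc}(A)$. (b) If $f\in\mathrm{lcc}(A)$ and $L_a$ is weakly precompact, then $fa\in\mathrm{ap}(A)$; if $f\in\mathrm{rcc}(A)$ and $R_a$ is weakly precompact, then $af\in\mathrm{ap}(A)$. (c) If $f\in\mathrm{wpL}(A)$ and $L_a$, $R_b$ are weakly precompact, then $bfa\in\mathrm{ap}(A)$ (where $bfa=b(fa)$, i.e. $bfa(x)=f(axb)$).
   Context: For a Banach algebra $A$, $f\in A^*$ and $a\in A$, define $fa,af\in A^*$ by $fa(x)=f(ax)$ and $af(x)=f(xa)$. The operators $T_f,S_f:A\to A^*$ are $T_f(a)=fa$, $S_f(a)=af$. A set $E\subseteq A^*$ is an L-set if for every weakly null sequence $(x_n)$ in $A$, $\lim_n\sup_{g\in E}|g(x_n)|=0$. A set is weakly precompact if every sequence in it has a weakly Cauchy subsequence; an operator is weakly precompact if it maps bounded sets to weakly precompact sets. $\mathrm{wpL}(A)$ is the set of $f\in A^*$ such that $T_f$ maps weakly precompact sets onto L-sets; $\mathrm{lcc}(A)$ (resp. $\mathrm{rcc}(A)$) is the set of $f$ such that $T_f$ (resp. $S_f$) is completely continuous (maps weakly null sequences to norm null sequences); $\mathrm{ap}(A)$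 is the set of $f$ such that $T_f$ is a compact operator. *)

theory Defs
  imports "HOL-Analysis.Analysis"
begin

(* The dual space A* is modelled as the type of bounded linear functionals
   'a =>L real (blinfun) with its operator norm. *)

definition weakly_null :: "(nat \<Rightarrow> 'a::real_normed_vector) \<Rightarrow> bool" where
  "weakly_null x \<longleftrightarrow> (\<forall>g :: 'a \<Rightarrow>\<^sub>L real. (\<lambda>n. blinfun_apply g (x n)) \<longlonglongrightarrow> 0)"

definition weakly_cauchy :: "(nat \<Rightarrow> 'a::real_normed_vector) \<Rightarrow> bool" where
  "weakly_cauchy x \<longleftrightarrow> (\<forall>g :: 'a \<Rightarrow>\<^sub>L real. Cauchy (\<lambda>n. blinfun_apply g (x n)))"

definition weakly_precompact :: "'a::real_normed_vector set \<Rightarrow> bool" where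
  "weakly_precompact S \<longleftrightarrow>
     (\<forall>x::nat\<Rightarrow>'a. (\<forall>n. x n \<in> S) \<longrightarrow> (\<exists>r::nat\<Rightarrow>nat. strict_mono r \<and> weakly_cauchy (x \<circ> r)))"

definition wp_operator :: "('a::real_normed_vector \<Rightarrow> 'b::real_normed_vector) \<Rightarrow> bool" where
  "wp_operator T \<longleftrightarrow> (\<forall>S. bounded S \<longrightarrow> weakly_precompact (T ` S))"

definition L_set :: "('a::real_normed_vector \<Rightarrow>\<^sub>L real) set \<Rightarrow> bool" where
  "L_set E \<longleftrightarrow> (\<forall>x. weakly_null x \<longrightarrow>
     (\<forall>e>0. eventually (\<lambda>n. \<forall>g\<in>E. \<bar>blinfun_apply g (x n)\<bar> \<le> e) sequentially))"

definition completely_continuous :: "('a::real_normed_vector \<Rightarrow> 'b::real_normed_vector) \<Rightarrow> bool" where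
  "completely_continuous T \<longleftrightarrow> (\<forall>x. weakly_null x \<longrightarrow> (\<lambda>n. T (x n)) \<longlonglongrightarrow> 0)"

definition compact_operator :: "('a::real_normed_vector \<Rightarrow> 'b::real_normed_vector) \<Rightarrow> bool" where
  "compact_operator T \<longleftrightarrow> (\<forall>S. bounded S \<longrightarrow> compact (closure (T ` S)))"

text \<open>fa(x) = f(ax) and af(x) = f(xa).\<close>
definition lmul :: "('a::real_normed_algebra \<Rightarrow>\<^sub>L real) \<Rightarrow> 'a \<Rightarrow> ('a \<Rightarrow>\<^sub>L real)" where
  "lmul f a = Blinfun (\<lambda>x. blinfun_apply f (a * x))"

definition rmul :: "'a::real_normed_algebra \<Rightarrow> ('a \<Rightarrow>\<^sub>L real) \<Rightarrow> ('a \<Rightarrow>\<^sub>L real)" where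
  "rmul a f = Blinfun (\<lambda>x. blinfun_apply f (x * a))"

definition T_op :: "('a::real_normed_algebra \<Rightarrow>\<^sub>L real) \<Rightarrow> 'a \<Rightarrow> ('a \<Rightarrow>\<^sub>L real)" where
  "T_op f = (\<lambda>a. lmul f a)"

definition S_op :: "('a::real_normed_algebra \<Rightarrow>\<^sub>L real) \<Rightarrow> 'a \<Rightarrow> ('a \<Rightarrow>\<^sub>L real)" where
  "S_op f = (\<lambda>a. rmul a f)"

definition wpL :: "('a::real_normed_algebra \<Rightarrow>\<^sub>L real) set" where
  "wpL = {f. \<forall>S. weakly_precompact S \<longrightarrow> L_set (T_op f ` S)}"

definition lcc :: "('a::real_normed_algebra \<Rightarrow>\<^sub>L real) set" where
  "lcc = {f. completely_continuous (T_op f)}"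

definition rcc :: "('a::real_normed_algebra \<Rightarrow>\<^sub>L real) set" where
  "rcc = {f. completely_continuous (S_op f)}"

definition ap :: "('a::real_normed_algebra \<Rightarrow>\<^sub>L real) set" where
  "ap = {f. compact_operator (T_op f)}"

end

theory Submission
  imports Defs "HOL-Library.Diagonal_Subsequence"
begin


lemma lmul_apply[simp]: "blinfun_apply (lmul f a) x = blinfun_apply f (a * x)"
proof -
  have "bounded_linear (\<lambda>x. blinfun_apply f (a * x))"
    by (intro bounded_linear_compose[OF blinfun.bounded_linear_right bounded_linear_mult_right])
  then show ?thesis unfolding lmul_def by (simp add: bounded_linear_Blinfun_apply)
qed

lemma rmul_apply[simp]: "blinfun_apply (rmul a f) x = blinfun_apply f (x * a)"
proof -
  have "bounded_linear (\<lambda>x. blinfun_apply f (x * a))"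
    by (intro bounded_linear_compose[OF blinfun.bounded_linear_right bounded_linear_mult_left])
  then show ?thesis unfolding rmul_def by (simp add: bounded_linear_Blinfun_apply)
qed

lemma norm_le_unit:
  fixes g :: "'a::real_normed_vector \<Rightarrow>\<^sub>L real"
  assumes "e \<ge> 0" "\<And>y. norm y \<le> 1 \<Longrightarrow> \<bar>g y\<bar> \<le> e"
  shows "norm g \<le> e"
proof (rule norm_blinfun_bound[OF assms(1)])
  fix y :: 'a
  show "norm (g y) \<le> e * norm y"
  proof (cases "y = 0")
    case True then show ?thesis by simp
  next
    case False
    then have n: "norm y > 0" by simp
    have "norm (scaleR (1/norm y) y) \<le> 1" using n by simp
    then have "\<bar>g (scaleR (1/norm y) y)\<bar> \<le> e" by (rule assms(2))
    moreover have "g (scaleR (1/norm y) y) = g y / norm y"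
      by (simp add: blinfun.scaleR_right)
    ultimately have "\<bar>g y\<bar> / norm y \<le> e" by simp
    then show ?thesis using n by (simp add: divide_le_eq mult.commute)
  qed
qed

lemma tendsto_zero_le:
  fixes X :: "nat \<Rightarrow> 'b::real_normed_vector"
  assumes "\<And>e. e > 0 \<Longrightarrow> eventually (\<lambda>n. norm (X n) \<le> e) sequentially"
  shows "X \<longlonglongrightarrow> 0"
proof (rule tendstoI)
  fix e :: real assume "e > 0"
  then have "e/2 > 0" by simp
  from assms[OF this] show "eventually (\<lambda>n. dist (X n) 0 < e) sequentially"
    by eventually_elim (use \<open>e > 0\<close> in simp)
qed

lemma weakly_null_cauchy: "weakly_null x \<Longrightarrow> weakly_cauchy x"
  unfolding weakly_null_def weakly_cauchy_def using LIMSEQ_imp_Cauchy by blast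

lemma T_op_diff: "lmul f (x - y) = lmul f x - lmul f y"
  by (rule blinfun_eqI) (simp add: algebra_simps blinfun.diff_right blinfun.diff_left)

lemma S_op_diff: "rmul (x - y) f = rmul x f - rmul y f"
  by (rule blinfun_eqI) (simp add: algebra_simps blinfun.diff_right blinfun.diff_left)



lemma cauchy_sub_compact:
  fixes X :: "'b::banach set"
  assumes "\<And>s::nat \<Rightarrow> 'b. (\<forall>n. s n \<in> X) \<Longrightarrow> \<exists>r. strict_mono r \<and> Cauchy (s \<circ> r)"
  shows "compact (closure X)"
proof (rule seq_compact_imp_Heine_Borel, rule seq_compactI)
  fix t :: "nat \<Rightarrow> 'b" assume t: "\<forall>n. t n \<in> closure X"
  have "\<forall>n. \<exists>y\<in>X. dist (t n) y < inverse (real (Suc n))"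
  proof
    fix n
    have "inverse (real (Suc n)) > 0" by simp
    then show "\<exists>y\<in>X. dist (t n) y < inverse (real (Suc n))"
      using t closure_approachableD by blast
  qed
  then obtain s where s: "\<And>n. s n \<in> X" "\<And>n. dist (t n) (s n) < inverse (real (Suc n))" by metis
  from assms[of s] s(1) obtain r where r: "strict_mono r" "Cauchy (s \<circ> r)" by blast
  then obtain l where l: "(s \<circ> r) \<longlonglongrightarrow> l" using Cauchy_convergent convergent_def by blast
  have "(\<lambda>n. (t \<circ> r) n - (s \<circ> r) n) \<longlonglongrightarrow> 0"
  proof (rule Lim_null_comparison[OF _ LIMSEQ_inverse_real_of_nat])
    show "\<forall>\<^sub>F n in sequentially. norm ((t \<circ> r) n - (s \<circ> r) n) \<le> inverse (real (Suc n))"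
    proof (rule always_eventually, rule allI)
      fix n
      have "norm ((t \<circ> r) n - (s \<circ> r) n) < inverse (real (Suc (r n)))"
        using s(2)[of "r n"] by (simp add: dist_norm)
      also have "\<dots> \<le> inverse (real (Suc n))"
        using seq_suble[OF r(1), of n] by (simp add: field_simps)
      finally show "norm ((t \<circ> r) n - (s \<circ> r) n) \<le> inverse (real (Suc n))" by simp
    qed
  qed
  then have tl: "(t \<circ> r) \<longlonglongrightarrow> l" using Lim_transform[OF l] by blast
  have "l \<in> closure X"
    by (rule closed_sequentially[OF closed_closure _ tl]) (use t in simp)
  then show "\<exists>l\<in>closure X. \<exists>r::nat\<Rightarrow>nat. strict_mono r \<and> (t \<circ> r) \<longlonglongrightarrow> l"
    using r(1) tl by blast
qed

lemma cc_weakly_cauchy: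
  fixes T :: "'a::real_normed_vector \<Rightarrow> 'b::real_normed_vector"
  assumes cc: "completely_continuous T" and lin: "\<And>x y. T (x - y) = T x - T y"
    and wc: "weakly_cauchy w"
  shows "Cauchy (\<lambda>n. T (w n))"
proof (rule ccontr)
  assume "\<not> Cauchy (\<lambda>n. T (w n))"
  then obtain e where e: "e > 0" "\<forall>N. \<exists>m\<ge>N. \<exists>n\<ge>N. \<not> dist (T (w m)) (T (w n)) < e"
    unfolding Cauchy_def by blast
  have "\<forall>N. \<exists>m. N \<le> m \<and> (\<exists>n. N \<le> n \<and> e \<le> dist (T (w m)) (T (w n)))"
    using e(2) by (simp add: not_less)
  then obtain p where p: "\<And>N. N \<le> p N \<and> (\<exists>n. N \<le> n \<and> e \<le> dist (T (w (p N))) (T (w n)))"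
    by (metis (no_types))
  then obtain q where q: "\<And>N. N \<le> q N \<and> e \<le> dist (T (w (p N))) (T (w (q N)))"
    by (metis (no_types))
  have pq: "\<And>N. p N \<ge> N" "\<And>N. q N \<ge> N"
    "\<And>N. dist (T (w (p N))) (T (w (q N))) \<ge> e" using p q by auto
  define z where "z N = w (p N) - w (q N)" for N
  have "weakly_null z"
    unfolding weakly_null_def
  proof
    fix g :: "'a \<Rightarrow>\<^sub>L real"
    have C: "Cauchy (\<lambda>n. g (w n))" using wc unfolding weakly_cauchy_def by blast
    show "(\<lambda>n. g (z n)) \<longlonglongrightarrow> 0"
    proof (rule LIMSEQ_I)
      fix r :: real assume "r > 0"
      with C obtain M where M: "\<forall>m\<ge>M. \<forall>n\<ge>M. dist (g (w m)) (g (w n)) < r"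
        unfolding Cauchy_def by blast
      show "\<exists>no. \<forall>n\<ge>no. norm (g (z n) - 0) < r"
      proof (intro exI allI impI)
        fix n assume "n \<ge> M"
        then have "dist (g (w (p n))) (g (w (q n))) < r"
          using M pq(1,2) order_trans by blast
        then show "norm (g (z n) - 0) < r"
          by (simp add: z_def blinfun.diff_right dist_real_def)
      qed
    qed
  qed
  then have "(\<lambda>n. T (z n)) \<longlonglongrightarrow> 0" using cc unfolding completely_continuous_def by blast
  then have "eventually (\<lambda>n. dist (T (z n)) 0 < e) sequentially"
    using e(1) tendstoD by blast
  then obtain n where "dist (T (z n)) 0 < e" by (meson eventually_sequentially order_refl)
  then have "dist (T (w (p n))) (T (w (q n))) < e"
    by (simp add: z_def lin dist_norm)
  with pq(3)[of n] show False by linarith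
qed

lemma wp_cc_compact:
  fixes T :: "'a::real_normed_vector \<Rightarrow> 'b::banach"
  assumes wp: "weakly_precompact W" and cc: "completely_continuous T"
    and lin: "\<And>x y. T (x - y) = T x - T y"
  shows "compact (closure (T ` W))"
proof (rule cauchy_sub_compact)
  fix s :: "nat \<Rightarrow> 'b" assume s: "\<forall>n. s n \<in> T ` W"
  then have "\<forall>n. \<exists>x. x \<in> W \<and> s n = T x" by blast
  then obtain w where w0: "\<forall>n. w n \<in> W \<and> s n = T (w n)" by (rule choice[THEN exE])
  then have w: "\<And>n. w n \<in> W" "\<And>n. s n = T (w n)" by auto
  have ex: "\<exists>r. strict_mono r \<and> weakly_cauchy (w \<circ> r)"
    using wp w0 unfolding weakly_precompact_def by simp
  then obtain r where r: "strict_mono r" "weakly_cauchy (w \<circ> r)" by (elim exE conjE)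
  have "Cauchy (\<lambda>n. T ((w \<circ> r) n))" by (rule cc_weakly_cauchy[OF cc lin r(2)])
  moreover have "s \<circ> r = (\<lambda>n. T ((w \<circ> r) n))" by (simp add: fun_eq_iff w(2))
  ultimately show "\<exists>r. strict_mono r \<and> Cauchy (s \<circ> r)"
    using r(1) by metis
qed



lemma lmul_lmul: "lmul (lmul f a) x = lmul f (a * x)"
  by (rule blinfun_eqI) (simp add: mult.assoc)

lemma part_a1:
  fixes f :: "'a::{real_normed_algebra, banach} \<Rightarrow>\<^sub>L real"
  assumes "f \<in> wpL" "wp_operator (\<lambda>x. a * x)"
  shows "lmul f a \<in> rcc"
proof -
  let ?S = "(\<lambda>x. a * x) ` cball (0::'a) 1"
  have wpS: "weakly_precompact ?S" using assms(2) unfolding wp_operator_def by (simp add: bounded_cball)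
  have L: "L_set (T_op f ` ?S)" using assms(1) wpS unfolding wpL_def by blast
  show ?thesis unfolding rcc_def completely_continuous_def S_op_def
  proof (intro CollectI allI impI)
    fix x :: "nat \<Rightarrow> 'a" assume wn: "weakly_null x"
    show "(\<lambda>n. rmul (x n) (lmul f a)) \<longlonglongrightarrow> 0"
    proof (rule tendsto_zero_le)
      fix e :: real assume "e > 0"
      from L[unfolded L_set_def, rule_format, OF wn this]
      have ev: "eventually (\<lambda>n. \<forall>g\<in>T_op f ` ?S. \<bar>g (x n)\<bar> \<le> e) sequentially" .
      then show "eventually (\<lambda>n. norm (rmul (x n) (lmul f a)) \<le> e) sequentially"
      proof eventually_elim
        case (elim n)
        show ?case
        proof (rule norm_le_unit)
          show "0 \<le> e" using \<open>e > 0\<close> by simp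
          fix y :: 'a assume "norm y \<le> 1"
          then have "T_op f (a * y) \<in> T_op f ` ?S" by auto
          then have "\<bar>T_op f (a * y) (x n)\<bar> \<le> e" using elim by blast
          then show "\<bar>rmul (x n) (lmul f a) y\<bar> \<le> e" by (simp add: T_op_def mult.assoc)
        qed
      qed
    qed
  qed
qed

lemma part_b1:
  fixes f :: "'a::{real_normed_algebra, banach} \<Rightarrow>\<^sub>L real"
  assumes "f \<in> lcc" "wp_operator (\<lambda>x. a * x)"
  shows "lmul f a \<in> ap"
  unfolding ap_def compact_operator_def
proof (intro CollectI allI impI)
  fix S :: "'a set" assume "bounded S"
  then have wpS: "weakly_precompact ((\<lambda>x. a * x) ` S)" using assms(2) wp_operator_def by blast
  have cc: "completely_continuous (T_op f)" using assms(1) unfolding lcc_def by simp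
  have "compact (closure (T_op f ` ((\<lambda>x. a * x) ` S)))"
    by (rule wp_cc_compact[OF wpS cc]) (simp add: T_op_def T_op_diff)
  moreover have "T_op (lmul f a) ` S = T_op f ` ((\<lambda>x. a * x) ` S)"
    by (simp add: T_op_def lmul_lmul image_image)
  ultimately show "compact (closure (T_op (lmul f a) ` S))" by simp
qed



lemma weakly_null_range_wp:
  fixes x :: "nat \<Rightarrow> 'a::real_normed_vector"
  assumes wn: "weakly_null x"
  shows "weakly_precompact (range x)"
  unfolding weakly_precompact_def
proof (intro allI impI)
  fix s :: "nat \<Rightarrow> 'a" assume "\<forall>n. s n \<in> range x"
  then have "\<forall>n. \<exists>m. s n = x m" by blast
  then obtain \<phi> where \<phi>: "\<forall>n. s n = x (\<phi> n)" by (rule choice[THEN exE])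
  show "\<exists>r. strict_mono r \<and> weakly_cauchy (s \<circ> r)"
  proof (cases "\<exists>m. infinite {n. \<phi> n = m}")
    case True
    then obtain m where inf: "infinite {n. \<phi> n = m}" by blast
    let ?r = "enumerate {n. \<phi> n = m}"
    have sm: "strict_mono ?r" using strict_mono_enumerate[OF inf] .
    have "\<And>n. ?r n \<in> {n. \<phi> n = m}" using enumerate_in_set[OF inf] .
    then have "(s \<circ> ?r) = (\<lambda>n. x m)" using \<phi> by (auto simp: fun_eq_iff)
    moreover have "weakly_cauchy (\<lambda>n. x m)"
      unfolding weakly_cauchy_def by (intro allI LIMSEQ_imp_Cauchy[OF tendsto_const])
    ultimately show ?thesis using sm by metis
  next
    case False
    then have fin: "\<And>m. finite {n. \<phi> n = m}" by blast
    have lim: "filterlim \<phi> at_top sequentially"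
      unfolding filterlim_at_top
    proof
      fix Z :: nat
      have "{n. \<phi> n < Z} = (\<Union>m<Z. {n. \<phi> n = m})" by auto
      then have "finite {n. \<phi> n < Z}" using fin by simp
      then obtain k where k: "{n. \<phi> n < Z} \<subseteq> {..<k}" using finite_nat_bounded by blast
      show "eventually (\<lambda>n. Z \<le> \<phi> n) sequentially"
        unfolding eventually_sequentially
      proof (intro exI allI impI)
        fix n assume "k \<le> n"
        then show "Z \<le> \<phi> n" using k by (auto simp: not_le[symmetric])
      qed
    qed
    have "weakly_null s"
      unfolding weakly_null_def
    proof
      fix g :: "'a \<Rightarrow>\<^sub>L real"
      have "(\<lambda>n. g (x n)) \<longlonglongrightarrow> 0" using wn unfolding weakly_null_def by blast
      from filterlim_compose[OF this lim] show "(\<lambda>n. g (s n)) \<longlonglongrightarrow> 0" using \<phi> by simp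
    qed
    then have "weakly_cauchy (s \<circ> id)" using weakly_null_cauchy by simp
    then show ?thesis using strict_mono_id by blast
  qed
qed

lemma cauchy_sub_diff:
  fixes c :: "nat \<Rightarrow> real"
  assumes "Cauchy c" "\<And>i. a i \<ge> i" "\<And>i. b i \<ge> i"
  shows "(\<lambda>i. c (a i) - c (b i)) \<longlonglongrightarrow> 0"
proof (rule LIMSEQ_I)
  fix r :: real assume "r > 0"
  with assms(1) obtain M where M: "\<forall>m\<ge>M. \<forall>n\<ge>M. dist (c m) (c n) < r"
    unfolding Cauchy_def by blast
  show "\<exists>no. \<forall>n\<ge>no. norm (c (a n) - c (b n) - 0) < r"
  proof (intro exI allI impI)
    fix n assume "n \<ge> M"
    then have "dist (c (a n)) (c (b n)) < r"
      using M assms(2,3) order_trans by blast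
    then show "norm (c (a n) - c (b n) - 0) < r" by (simp add: dist_real_def)
  qed
qed

lemma L_trick:
  fixes g :: "nat \<Rightarrow> ('a::real_normed_vector \<Rightarrow>\<^sub>L real)"
  assumes L: "L_set E" and gE: "\<And>n. g n \<in> E" and pt: "\<And>w. (\<lambda>n. g n w) \<longlonglongrightarrow> 0"
    and W: "weakly_precompact W" and e: "e > 0"
  shows "eventually (\<lambda>n. \<forall>w\<in>W. \<bar>g n w\<bar> \<le> e) sequentially"
proof (rule ccontr)
  assume "\<not> eventually (\<lambda>n. \<forall>w\<in>W. \<bar>g n w\<bar> \<le> e) sequentially"
  then have "\<forall>N. \<exists>n. N \<le> n \<and> (\<exists>w\<in>W. e < \<bar>g n w\<bar>)"
    unfolding eventually_sequentially by (auto simp: not_le)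
  then obtain p where p: "\<forall>N. N \<le> p N \<and> (\<exists>w\<in>W. e < \<bar>g (p N) w\<bar>)"
    by (rule choice[THEN exE])
  then have "\<forall>N. \<exists>w. w \<in> W \<and> e < \<bar>g (p N) w\<bar>" by blast
  then obtain w where w: "\<forall>N. w N \<in> W \<and> e < \<bar>g (p N) (w N)\<bar>"
    by (rule choice[THEN exE])
  have ex: "\<exists>r. strict_mono r \<and> weakly_cauchy (w \<circ> r)"
    using W w unfolding weakly_precompact_def by simp
  then obtain r where r: "strict_mono r" "weakly_cauchy (w \<circ> r)" by (elim exE conjE)
  define u where "u = w \<circ> r"
  define q where "q k = p (r k)" for k
  have qk: "q k \<ge> k" for k
    using p seq_suble[OF r(1), of k] unfolding q_def by (meson order_trans)
  have big: "e < \<bar>g (q k) (u k)\<bar>" for k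
    using w unfolding q_def u_def by simp
  have "\<forall>j K. \<exists>k. K < k \<and> \<bar>g (q k) (u j)\<bar> < e/2"
  proof (intro allI)
    fix j K
    have "eventually (\<lambda>n. dist (g n (u j)) 0 < e/2) sequentially"
      by (rule tendstoD[OF pt[of "u j"]]) (use e in simp)
    then obtain N0 where N0: "\<And>n. n \<ge> N0 \<Longrightarrow> dist (g n (u j)) 0 < e/2"
      unfolding eventually_sequentially by blast
    let ?k = "max (Suc K) N0"
    have "q ?k \<ge> N0" using qk[of ?k] by simp
    then have "\<bar>g (q ?k) (u j)\<bar> < e/2" using N0 by simp
    then show "\<exists>k. K < k \<and> \<bar>g (q k) (u j)\<bar> < e/2" by (intro exI[of _ ?k]) simp
  qed
  then obtain nxt where nxt: "\<forall>j K. K < nxt j K \<and> \<bar>g (q (nxt j K)) (u j)\<bar> < e/2"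
    by metis
  define kk where "kk = rec_nat (0::nat) (\<lambda>i prev. nxt prev prev)"
  have kkS: "kk (Suc i) = nxt (kk i) (kk i)" for i by (simp add: kk_def)
  have kkmono: "strict_mono kk"
    unfolding strict_mono_Suc_iff using nxt kkS by simp
  have small: "\<bar>g (q (kk (Suc i))) (u (kk i))\<bar> < e/2" for i
    using nxt kkS by simp
  define d where "d i = u (kk (Suc i)) - u (kk i)" for i
  have "weakly_null d"
    unfolding weakly_null_def
  proof
    fix h :: "'a \<Rightarrow>\<^sub>L real"
    have C: "Cauchy (\<lambda>n. h (u n))" using r(2) unfolding weakly_cauchy_def u_def by blast
    have "(\<lambda>i. h (u (kk (Suc i))) - h (u (kk i))) \<longlonglongrightarrow> 0"
    proof (rule cauchy_sub_diff[OF C])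
      show "\<And>i. i \<le> kk (Suc i)" using seq_suble[OF kkmono] le_SucI by blast
      show "\<And>i. i \<le> kk i" using seq_suble[OF kkmono] by blast
    qed
    then show "(\<lambda>n. h (d n)) \<longlonglongrightarrow> 0" by (simp add: d_def blinfun.diff_right)
  qed
  from L[unfolded L_set_def, rule_format, OF this, of "e/4"] e
  have "eventually (\<lambda>i. \<forall>g'\<in>E. \<bar>g' (d i)\<bar> \<le> e/4) sequentially" by simp
  then obtain i where i: "\<forall>g'\<in>E. \<bar>g' (d i)\<bar> \<le> e/4"
    unfolding eventually_sequentially by blast
  let ?g0 = "g (q (kk (Suc i)))"
  have "?g0 (u (kk (Suc i))) = ?g0 (d i) + ?g0 (u (kk i))"
    by (simp add: d_def blinfun.diff_right)
  moreover have "\<bar>?g0 (d i)\<bar> \<le> e/4" using i gE by blast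
  moreover note small[of i] big[of "kk (Suc i)"]
  ultimately show False using e by linarith
qed



lemma schauder_like:
  fixes V :: "'b \<Rightarrow> ('a::real_normed_vector \<Rightarrow>\<^sub>L real)" and T :: "'a \<Rightarrow> 'c::banach"
  assumes K: "compact (closure (V ` B))"
    and lin: "\<And>x y. T (x - y) = T x - T y"
    and H: "\<And>x c. c \<ge> 0 \<Longrightarrow> (\<forall>y\<in>B. \<bar>V y x\<bar> \<le> c) \<Longrightarrow> norm (T x) \<le> c"
    and S: "bounded S"
  shows "compact (closure (T ` S))"
proof (rule cauchy_sub_compact)
  fix s :: "nat \<Rightarrow> 'c" assume s: "\<forall>n. s n \<in> T ` S"
  then have "\<forall>n. \<exists>z. z \<in> S \<and> s n = T z" by blast
  then obtain x where x: "\<forall>n. x n \<in> S \<and> s n = T (x n)" by (rule choice[THEN exE])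
  from S obtain M where M: "M > 0" "\<And>z. z \<in> S \<Longrightarrow> norm z \<le> M"
    unfolding bounded_pos by blast
  have xM: "norm (x n) \<le> M" for n using x M(2) by blast
  have tbK: "\<forall>\<epsilon>>0. \<exists>F. finite F \<and> closure (V ` B) \<subseteq> (\<Union>g\<in>F. ball g \<epsilon>)"
    using K by (simp add: compact_eq_totally_bounded)
  have "\<forall>k. \<exists>F. finite F \<and> V ` B \<subseteq> (\<Union>g\<in>F. ball g (inverse (real (Suc k))))"
  proof
    fix k
    have "inverse (real (Suc k)) > 0" by simp
    from tbK[rule_format, OF this]
    obtain F where F1: "finite F" and F2: "closure (V ` B) \<subseteq> (\<Union>g\<in>F. ball g (inverse (real (Suc k))))"
      by (elim exE conjE)
    have "V ` B \<subseteq> (\<Union>g\<in>F. ball g (inverse (real (Suc k))))"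
      by (rule order_trans[OF closure_subset F2])
    with F1 show "\<exists>F. finite F \<and> V ` B \<subseteq> (\<Union>g\<in>F. ball g (inverse (real (Suc k))))"
      by blast
  qed
  then obtain F where F: "\<forall>k. finite (F k) \<and> V ` B \<subseteq> (\<Union>g\<in>F k. ball g (inverse (real (Suc k))))"
    by (rule choice[THEN exE])
  define D where "D = insert 0 (\<Union>k. F k)"
  have cD: "countable D" unfolding D_def using F by (simp add: countable_finite)
  define d where "d = from_nat_into D"
  have dD: "range d = D" unfolding d_def using cD by (simp add: D_def)
  interpret sub: subseqs "\<lambda>i s. convergent (\<lambda>n. d i (x (s n)))"
  proof
    fix i and s :: "nat \<Rightarrow> nat" assume "strict_mono s"
    have "bounded (range (\<lambda>n. d i (x (s n))))"
    proof (rule boundedI)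
      fix z assume "z \<in> range (\<lambda>n. d i (x (s n)))"
      then obtain n where "z = d i (x (s n))" by blast
      then have "norm z \<le> norm (d i) * norm (x (s n))" using norm_blinfun[of "d i" "x (s n)"] by simp
      also have "\<dots> \<le> norm (d i) * M" using xM by (simp add: mult_left_mono)
      finally show "norm z \<le> norm (d i) * M" .
    qed
    then obtain l r' where "strict_mono r'" "((\<lambda>n. d i (x (s n))) \<circ> r') \<longlonglongrightarrow> l"
      using bounded_imp_convergent_subsequence by blast
    then show "\<exists>r'. strict_mono r' \<and> convergent (\<lambda>n. d i (x ((s \<circ> r') n)))"
      by (auto simp: convergent_def o_def)
  qed
  define r where "r = sub.diagseq"
  have rmono: "strict_mono r" unfolding r_def by (rule sub.subseq_diagseq)
  have conv: "Cauchy (\<lambda>n. g (x (r n)))" if gD: "g \<in> D" for g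
  proof -
    obtain i where i: "g = d i" using gD dD by blast
    have "convergent (\<lambda>n. d i (x ((sub.diagseq \<circ> (+) (Suc i)) n)))"
    proof (rule sub.diagseq_holds)
      fix r' :: "nat \<Rightarrow> nat" and s :: "nat \<Rightarrow> nat" and n
      assume "strict_mono r'" "convergent (\<lambda>m. d n (x (s m)))"
      from convergent_subseq_convergent[OF this(2) this(1)]
      show "convergent (\<lambda>m. d n (x ((s \<circ> r') m)))" by (simp add: o_def)
    qed
    then have "convergent (\<lambda>n. d i (x (sub.diagseq (n + Suc i))))" by (simp add: o_def add.commute)
    then have "convergent (\<lambda>n. d i (x (sub.diagseq n)))"
      using convergent_ignore_initial_segment[where f="\<lambda>n. d i (x (sub.diagseq n))" and m="Suc i"] by simp
    then show ?thesis using i r_def convergent_Cauchy by blast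
  qed
  show "\<exists>r. strict_mono r \<and> Cauchy (s \<circ> r)"
  proof (intro exI conjI)
    show "strict_mono r" by (rule rmono)
    show "Cauchy (s \<circ> r)"
      unfolding Cauchy_def
    proof (intro allI impI)
      fix e :: real assume e: "e > 0"
      then have "e / (4 * M) > 0" using M by simp
      then obtain k where k: "inverse (real (Suc k)) < e / (4 * M)"
        using reals_Archimedean by blast
      have fk: "finite (F k)" using F by blast
      have FD: "F k \<subseteq> D" unfolding D_def by blast
      have "\<forall>g\<in>F k. eventually (\<lambda>N. \<forall>m\<ge>N. \<forall>n\<ge>N. dist (g (x (r m))) (g (x (r n))) < e/4) sequentially"
      proof
        fix g assume "g \<in> F k"
        then have "Cauchy (\<lambda>n. g (x (r n)))" using conv FD by blast
        then obtain N0 where N0: "\<forall>m\<ge>N0. \<forall>n\<ge>N0. dist (g (x (r m))) (g (x (r n))) < e/4"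
          unfolding Cauchy_def using e by (meson divide_pos_pos zero_less_numeral)
        show "eventually (\<lambda>N. \<forall>m\<ge>N. \<forall>n\<ge>N. dist (g (x (r m))) (g (x (r n))) < e/4) sequentially"
          unfolding eventually_sequentially using N0 by (meson order_trans)
      qed
      from eventually_ball_finite[OF fk this]
      obtain N where N: "\<forall>g\<in>F k. \<forall>m\<ge>N. \<forall>n\<ge>N. dist (g (x (r m))) (g (x (r n))) < e/4"
        unfolding eventually_sequentially by blast
      show "\<exists>N. \<forall>m\<ge>N. \<forall>n\<ge>N. dist ((s \<circ> r) m) ((s \<circ> r) n) < e"
      proof (intro exI allI impI)
        fix m n assume mn: "N \<le> m" "N \<le> n"
        define z where "z = x (r m) - x (r n)"
        have nz: "norm z \<le> 2 * M"
          using norm_triangle_ineq4[of "x (r m)" "x (r n)"] xM[of "r m"] xM[of "r n"]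
          unfolding z_def by linarith
        have "norm (T z) \<le> 3 * e / 4"
        proof (rule H)
          show "0 \<le> 3 * e / 4" using e by simp
          show "\<forall>y\<in>B. \<bar>V y z\<bar> \<le> 3 * e / 4"
          proof
            fix y assume "y \<in> B"
            then have "V y \<in> (\<Union>g\<in>F k. ball g (inverse (real (Suc k))))" using F by blast
            then obtain g where g: "g \<in> F k" "dist g (V y) < inverse (real (Suc k))" by auto
            have g1: "\<bar>g z\<bar> < e/4"
              using N g(1) mn unfolding z_def by (simp add: blinfun.diff_right dist_real_def)
            have "norm (V y - g) < e / (4 * M)"
              using g(2) k by (simp add: dist_norm norm_minus_commute)
            then have "norm (V y - g) * norm z \<le> e / (4 * M) * (2 * M)"
              using nz e M by (intro mult_mono) auto
            also have "\<dots> = e / 2" using M by simp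
            finally have g2: "\<bar>(V y - g) z\<bar> \<le> e / 2"
              using norm_blinfun[of "V y - g" z] by simp
            have "V y z = g z + (V y - g) z" by (simp add: blinfun.diff_left)
            then show "\<bar>V y z\<bar> \<le> 3 * e / 4" using g1 g2 by linarith
          qed
        qed
        then show "dist ((s \<circ> r) m) ((s \<circ> r) n) < e"
          using x e unfolding z_def by (simp add: dist_norm lin[symmetric])
      qed
    qed
  qed
qed



lemma part_a2:
  fixes f :: "'a::{real_normed_algebra, banach} \<Rightarrow>\<^sub>L real"
  assumes "f \<in> wpL" "wp_operator (\<lambda>x. x * a)"
  shows "rmul a f \<in> lcc"
proof -
  let ?W = "(\<lambda>y. y * a) ` cball (0::'a) 1"
  have wpW: "weakly_precompact ?W" using assms(2) unfolding wp_operator_def by simp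
  show ?thesis unfolding lcc_def completely_continuous_def
  proof (intro CollectI allI impI)
    fix x :: "nat \<Rightarrow> 'a" assume wn: "weakly_null x"
    have L: "L_set (T_op f ` range x)"
      using assms(1) weakly_null_range_wp[OF wn] unfolding wpL_def by blast
    have gE: "\<And>n. lmul f (x n) \<in> T_op f ` range x" by (simp add: T_op_def)
    have pt: "(\<lambda>n. lmul f (x n) w) \<longlonglongrightarrow> 0" for w
    proof -
      have "(\<lambda>n. rmul w f (x n)) \<longlonglongrightarrow> 0" using wn unfolding weakly_null_def by blast
      then show ?thesis by simp
    qed
    show "(\<lambda>n. T_op (rmul a f) (x n)) \<longlonglongrightarrow> 0"
    proof (rule tendsto_zero_le)
      fix e :: real assume e: "e > 0"
      from L_trick[where E="T_op f ` range x" and g="\<lambda>n. lmul f (x n)", OF L gE pt wpW e]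
      show "eventually (\<lambda>n. norm (T_op (rmul a f) (x n)) \<le> e) sequentially"
      proof eventually_elim
        case (elim n)
        show ?case
        proof (rule norm_le_unit)
          show "0 \<le> e" using e by simp
          fix y :: 'a assume "norm y \<le> 1"
          then have "y * a \<in> ?W" by auto
          then have "\<bar>lmul f (x n) (y * a)\<bar> \<le> e" using elim by blast
          then show "\<bar>T_op (rmul a f) (x n) y\<bar> \<le> e" by (simp add: T_op_def mult.assoc)
        qed
      qed
    qed
  qed
qed

lemma part_b2:
  fixes f :: "'a::{real_normed_algebra, banach} \<Rightarrow>\<^sub>L real"
  assumes "f \<in> rcc" "wp_operator (\<lambda>x. x * a)"
  shows "rmul a f \<in> ap"
  unfolding ap_def compact_operator_def
proof (intro CollectI allI impI)
  fix S :: "'a set" assume S: "bounded S"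
  let ?B = "cball (0::'a) 1"
  have wpB: "weakly_precompact ((\<lambda>y. y * a) ` ?B)" using assms(2) unfolding wp_operator_def by simp
  have cc: "completely_continuous (S_op f)" using assms(1) unfolding rcc_def by simp
  have K0: "compact (closure (S_op f ` ((\<lambda>y. y * a) ` ?B)))"
    by (rule wp_cc_compact[OF wpB cc]) (simp add: S_op_def S_op_diff)
  have eq: "S_op f ` ((\<lambda>y. y * a) ` ?B) = (\<lambda>y. rmul (y * a) f) ` ?B"
    by (simp add: S_op_def image_image)
  have K: "compact (closure ((\<lambda>y. rmul (y * a) f) ` ?B))" using K0 eq by simp
  show "compact (closure (T_op (rmul a f) ` S))"
  proof (rule schauder_like[OF K _ _ S])
    show "\<And>x y. T_op (rmul a f) (x - y) = T_op (rmul a f) x - T_op (rmul a f) y"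
      by (simp add: T_op_def T_op_diff)
    fix x and c :: real assume c: "c \<ge> 0" and h: "\<forall>y\<in>?B. \<bar>rmul (y * a) f x\<bar> \<le> c"
    show "norm (T_op (rmul a f) x) \<le> c"
    proof (rule norm_le_unit[OF c])
      fix y :: 'a assume "norm y \<le> 1"
      then have "\<bar>rmul (y * a) f x\<bar> \<le> c" using h by simp
      then show "\<bar>T_op (rmul a f) x y\<bar> \<le> c" by (simp add: T_op_def mult.assoc)
    qed
  qed
qed

theorem mainTheorem3:
  fixes f :: "'a::{real_normed_algebra, banach} \<Rightarrow>\<^sub>L real" and a b :: 'a
  shows "(f \<in> wpL \<and> wp_operator (\<lambda>x. a * x) \<longrightarrow> lmul f a \<in> rcc)
       \<and> (f \<in> wpL \<and> wp_operator (\<lambda>x. x * a) \<longrightarrow> rmul a f \<in> lcc)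
       \<and> (f \<in> lcc \<and> wp_operator (\<lambda>x. a * x) \<longrightarrow> lmul f a \<in> ap)
       \<and> (f \<in> rcc \<and> wp_operator (\<lambda>x. x * a) \<longrightarrow> rmul a f \<in> ap)
       \<and> (f \<in> wpL \<and> wp_operator (\<lambda>x. a * x) \<and> wp_operator (\<lambda>x. x * b)
            \<longrightarrow> rmul b (lmul f a) \<in> ap)"
  using part_a1[of f a] part_a2[of f a] part_b1[of f a] part_b2[of f a]
    part_b2[OF part_a1[of f a], of b]
  by blast


end
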